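(* Let $X$ be a Banach space, $\mathfrak{L}$ a metric space of functions on $\mathbb{R}$, and $g\in\mathfrak{L}$ translation compact, with hull $\mathcal{H}(g)$, such that the translations $T(h)$ belong to $\mathcal{C}(\mathcal{H}(g),\mathcal{H}(g))$ for all $h\in\mathbb{R}$. Suppose that for every $f\in\mathcal{H}(g)$ the equation $\frac{d}{dt}u(t)=\mathcal{A}(u(t))+f(t)$ (with $\mathcal{A}$ a densely defined operator on $X$) is well posed for every initial datum $u_0\in X$ at every initial time $\tau\in\mathbb{R}$, generating a process $U_f(t,\tau)$ on $X$ (so $U_f(t,\tau)u_0=u(t)$, the solution with $u(\tau)=u_0$), and that $U_f(h+t,h+\tau)=U_{T(h)f}(t,\tau)$ for all $f\in\mathcal{H}(g)$, $h\in\mathbb{R}$, $t\ge\tau$. If the family $\{U_f(t,\tau)\}_{f\in\mathcal{H}(g)}$ is uniformly totally dissipative and asymptotically closed, then its uniform global attractor satisfies $$A_{\mathcal{H}(g)}=\bigcup_{f\in\mathcal{H}(g)}\{u(0): u \text{ is a complete bounded trajectory of } U_f(t,\tau)\}.$$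
   Context: A process on $X$ is a family of maps $U(t,\tau):X\to X$, $t\ge\tau$, with $U(\tau,\tau)=\mathrm{id}_X$ and $U(t,\tau)=U(t,s)U(s,\tau)$ for $t\ge s\ge\tau$. $g$ is translation compact in $\mathfrak{L}$ if $\{g(\cdot+h):h\in\mathbb{R}\}$ is precompact in $\mathfrak{L}$; its closure in $\mathfrak{L}$ is the hull $\mathcal{H}(g)$ (a compact metric space). $[T(h)f](t)=f(h+t)$. The symbol space of the family is $\Sigma=\mathcal{H}(g)$. For nonempty $B,C\subset X$, $\delta_X(B,C)=\sup_{x\in B}\inf_{\xi\in C}\|x-\xi\|$. A set $K\subset X$ is uniformly attracting if for every bounded $C\subset X$, $\lim_{t-\tau\to\infty}\sup_{f\in\mathcal{H}(g)}\delta_X(U_f(t,\tau)C,K)=0$; the uniform global attractor $A_{\mathcal{H}(g)}$ is the compact uniformly attracting set contained in every compact uniformly attracting set. The family is uniformly totally dissipative if for every $\varepsilon>0$ there is a finite set $M_\varepsilon\subset X$ whose open $\varepsilon$-neighborhood $\mathcal{U}_\varepsilon(M_\varepsilon)$ is uniformly absorbing, i.e. for each bounded $C$ there is $t_e$ with $U_f(t,\tau)C\subset\mathcal{U}_\varepsilon(M_\varepsilon)$ for all $f$ whenever $t-\tau\ge t_e$. The family is asymptotically closed if there is a (finite with at least two terms, or infinite) sequence $0=h_0<h_1<h_2<\cdots$ such that whenever $f_n\to f$ in $\mathcal{H}(g)$ and $U_{f_n}(h_k,0)x_n\to\xi^k\in X$ as $n\to\infty$ for every $k$, then $U_f(h_k,0)\xi^0=\xi^k$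 for every $k$. A complete bounded trajectory of $U_f(t,\tau)$ is a function $u:\mathbb{R}\to X$ with bounded range and $u(s)=U_f(s,\tau)u(\tau)$ for all $s\ge\tau$, $\tau\in\mathbb{R}$. *)

theory Defs
  imports "HOL-Analysis.Analysis"
begin

text \<open>The function space L is modelled as a metric (space, distance) on functions
  real => 'y, packaged in the library type of metrics.  Translation T(h)f = f(h + .).\<close>

definition transl :: "real \<Rightarrow> (real \<Rightarrow> 'y) \<Rightarrow> (real \<Rightarrow> 'y)" where
  "transl h f = (\<lambda>t. f (h + t))"

definition translation_compact :: "(real \<Rightarrow> 'y) metric \<Rightarrow> (real \<Rightarrow> 'y) \<Rightarrow> bool" where
  "translation_compact L g \<longleftrightarrow> g \<in> mspace L \<and>
     (\<forall>h. transl h g \<in> mspace L) \<and>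
     compactin (mtopology_of L) (mtopology_of L closure_of (range (\<lambda>h. transl h g)))"

definition trhull :: "(real \<Rightarrow> 'y) metric \<Rightarrow> (real \<Rightarrow> 'y) \<Rightarrow> (real \<Rightarrow> 'y) set" where
  "trhull L g = mtopology_of L closure_of (range (\<lambda>h. transl h g))"

definition is_process :: "(real \<Rightarrow> real \<Rightarrow> 'x \<Rightarrow> 'x) \<Rightarrow> bool" where
  "is_process V \<longleftrightarrow> (\<forall>\<tau>. V \<tau> \<tau> = id) \<and>
     (\<forall>t s \<tau>. \<tau> \<le> s \<and> s \<le> t \<longrightarrow> V t \<tau> = V t s \<circ> V s \<tau>)"

definition uniformly_attracting ::
  "'f set \<Rightarrow> ('f \<Rightarrow> real \<Rightarrow> real \<Rightarrow> 'x::real_normed_vector \<Rightarrow> 'x) \<Rightarrow> 'x set \<Rightarrow> bool" where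
  "uniformly_attracting \<Sigma> U K \<longleftrightarrow>
     (\<forall>C. bounded C \<and> C \<noteq> {} \<longrightarrow>
        (\<forall>\<epsilon>>0. \<exists>T. \<forall>f\<in>\<Sigma>. \<forall>t \<tau>. t - \<tau> \<ge> T \<longrightarrow>
            (\<forall>x\<in>C. \<exists>\<xi>\<in>K. norm (U f t \<tau> x - \<xi>) < \<epsilon>)))"

definition uniform_global_attractor ::
  "'f set \<Rightarrow> ('f \<Rightarrow> real \<Rightarrow> real \<Rightarrow> 'x::real_normed_vector \<Rightarrow> 'x) \<Rightarrow> 'x set \<Rightarrow> bool" where
  "uniform_global_attractor \<Sigma> U A \<longleftrightarrow>
     compact A \<and> uniformly_attracting \<Sigma> U A \<and>
     (\<forall>K. compact K \<and> uniformly_attracting \<Sigma> U K \<longrightarrow> A \<subseteq> K)"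

definition uniformly_absorbing ::
  "'f set \<Rightarrow> ('f \<Rightarrow> real \<Rightarrow> real \<Rightarrow> 'x::real_normed_vector \<Rightarrow> 'x) \<Rightarrow> 'x set \<Rightarrow> bool" where
  "uniformly_absorbing \<Sigma> U B \<longleftrightarrow>
     (\<forall>C. bounded C \<longrightarrow> (\<exists>te. \<forall>f\<in>\<Sigma>. \<forall>t \<tau>. t - \<tau> \<ge> te \<longrightarrow> U f t \<tau> ` C \<subseteq> B))"

definition uniformly_totally_dissipative ::
  "'f set \<Rightarrow> ('f \<Rightarrow> real \<Rightarrow> real \<Rightarrow> 'x::real_normed_vector \<Rightarrow> 'x) \<Rightarrow> bool" where
  "uniformly_totally_dissipative \<Sigma> U \<longleftrightarrow>
     (\<forall>\<epsilon>>0. \<exists>M. finite M \<and> uniformly_absorbing \<Sigma> U (\<Union>m\<in>M. ball m \<epsilon>))"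

text \<open>The index set I of the sequence 0 = h_0 < h_1 < ... is either {0..<n} with n >= 2
  (finite sequence with at least two terms) or all of nat (infinite sequence).\<close>
definition asymptotically_closed ::
  "(real \<Rightarrow> 'y) metric \<Rightarrow> (real \<Rightarrow> 'y) set \<Rightarrow>
   ((real \<Rightarrow> 'y) \<Rightarrow> real \<Rightarrow> real \<Rightarrow> 'x::topological_space \<Rightarrow> 'x) \<Rightarrow> bool" where
  "asymptotically_closed L \<Sigma> U \<longleftrightarrow>
     (\<exists>I hs. (I = UNIV \<or> (\<exists>n\<ge>2. I = {..<n})) \<and> hs (0::nat) = (0::real) \<and>
        (\<forall>i\<in>I. \<forall>j\<in>I. i < j \<longrightarrow> hs i < hs j) \<and>
        (\<forall>fs f xs \<xi>. (\<forall>n. fs n \<in> \<Sigma>) \<and> f \<in> \<Sigma> \<and>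
            limitin (mtopology_of L) fs f sequentially \<and>
            (\<forall>k\<in>I. ((\<lambda>n. U (fs n) (hs k) 0 (xs n)) \<longlongrightarrow> \<xi> k) sequentially) \<longrightarrow>
            (\<forall>k\<in>I. U f (hs k) 0 (\<xi> 0) = \<xi> k)))"

definition complete_bounded_trajectory ::
  "(real \<Rightarrow> real \<Rightarrow> 'x::real_normed_vector \<Rightarrow> 'x) \<Rightarrow> (real \<Rightarrow> 'x) \<Rightarrow> bool" where
  "complete_bounded_trajectory V u \<longleftrightarrow>
     bounded (range u) \<and> (\<forall>\<tau> s. \<tau> \<le> s \<longrightarrow> u s = V s \<tau> (u \<tau>))"

end

theory Submission
  imports Defs "HOL-Library.Diagonal_Subsequence"
begin


lemma subseq_conv:
  fixes v :: "nat \<Rightarrow> 'x::banach"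
  assumes H: "\<And>e. e>0 \<Longrightarrow> \<exists>k N. finite k \<and> (\<forall>n\<ge>N. v n \<in> (\<Union>x\<in>k. ball x e))"
  shows "\<exists>r l. strict_mono r \<and> (v \<circ> r) \<longlonglongrightarrow> l"
proof -
  have "compact (closure (range v))"
    unfolding compact_eq_totally_bounded
  proof
    show "complete (closure (range v))" by (simp add: complete_eq_closed)
    show "\<forall>\<epsilon>>0. \<exists>k. finite k \<and> closure (range v) \<subseteq> (\<Union>x\<in>k. ball x \<epsilon>)"
    proof (intro allI impI)
      fix e :: real assume e: "e > 0"
      then obtain k N where k: "finite k" "\<forall>n\<ge>N. v n \<in> (\<Union>x\<in>k. ball x (e/2))"
        using H[of "e/2"] by auto
      let ?k = "k \<union> v ` {..<N}"
      have fin: "finite ?k" using k by auto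
      have "range v \<subseteq> (\<Union>x\<in>?k. cball x (e/2))"
      proof
        fix y assume "y \<in> range v"
        then obtain n where y: "y = v n" by auto
        show "y \<in> (\<Union>x\<in>?k. cball x (e/2))"
        proof (cases "n < N")
          case True
          then have "v n \<in> ?k" by simp
          moreover have "y \<in> cball (v n) (e/2)" using y e by simp
          ultimately show ?thesis by blast
        next
          case False
          then have "v n \<in> (\<Union>x\<in>k. ball x (e/2))" using k(2) by simp
          then obtain x where "x \<in> k" "v n \<in> ball x (e/2)" by blast
          then show ?thesis using y by (auto intro!: bexI[of _ x])
        qed
      qed
      moreover have "closed (\<Union>x\<in>?k. cball x (e/2))" using fin by (intro closed_UN) auto
      ultimately have "closure (range v) \<subseteq> (\<Union>x\<in>?k. cball x (e/2))"
        by (simp add: closure_minimal)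
      also have "\<dots> \<subseteq> (\<Union>x\<in>?k. ball x e)" 
      proof (rule UN_mono)
        show "?k \<subseteq> ?k" by simp
        show "cball x (e / 2) \<subseteq> ball x e" for x :: 'x using e unfolding subset_eq by auto
      qed
      finally show "\<exists>k. finite k \<and> closure (range v) \<subseteq> (\<Union>x\<in>k. ball x e)" using fin by blast
    qed
  qed
  then have "seq_compact (closure (range v))" by (rule compact_imp_seq_compact)
  moreover have "\<forall>n. v n \<in> closure (range v)" by (meson closure_subset rangeI subsetD)
  ultimately obtain l r where "l \<in> closure (range v)" "strict_mono r" "(v \<circ> r) \<longlonglongrightarrow> l"
    by (rule seq_compactE)
  then show ?thesis by blast
qed

lemma diag_conv:
  fixes w :: "nat \<Rightarrow> nat \<Rightarrow> 'x::banach"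
  assumes H: "\<And>j e. e>0 \<Longrightarrow> \<exists>k N. finite k \<and> (\<forall>n\<ge>N. w n j \<in> (\<Union>x\<in>k. ball x e))"
  shows "\<exists>r. strict_mono r \<and> (\<forall>j. convergent (\<lambda>n. w (r n) j))"
proof -
  have ex: "\<exists>r'. strict_mono r' \<and> convergent (\<lambda>n. w (s (r' n)) j)" if s: "strict_mono s" for j and s :: "nat \<Rightarrow> nat"
  proof -
    have "\<exists>r l. strict_mono r \<and> ((\<lambda>n. w (s n) j) \<circ> r) \<longlonglongrightarrow> l"
    proof (rule subseq_conv)
      fix e :: real assume "e>0"
      obtain k N where kN: "finite k" "\<forall>n\<ge>N. w n j \<in> (\<Union>x\<in>k. ball x e)" using H[of e j] \<open>0 < e\<close> by auto
      have "\<forall>n\<ge>N. w (s n) j \<in> (\<Union>x\<in>k. ball x e)"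
      proof (intro allI impI)
        fix n assume "N \<le> n"
        then have "N \<le> s n" using seq_suble[OF s, of n] by (rule order.trans)
        then show "w (s n) j \<in> (\<Union>x\<in>k. ball x e)" using kN(2) by blast
      qed
      then show "\<exists>k N. finite k \<and> (\<forall>n\<ge>N. w (s n) j \<in> (\<Union>x\<in>k. ball x e))" using kN(1) by blast
    qed
    then obtain r l where r: "strict_mono r" and "((\<lambda>n. w (s n) j) \<circ> r) \<longlonglongrightarrow> l" by blast
    then have "(\<lambda>n. w (s (r n)) j) \<longlonglongrightarrow> l" by (simp add: o_def)
    then have "convergent (\<lambda>n. w (s (r n)) j)" unfolding convergent_def by (rule exI)
    with r show ?thesis by (intro exI[of _ r] conjI)
  qed
  let ?P = "\<lambda>j r. convergent (\<lambda>n. w (r n) j)"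
  interpret D: subseqs ?P
  proof (unfold subseqs_def, intro allI impI)
    fix j and s :: "nat \<Rightarrow> nat" assume "strict_mono s"
    from ex[OF this, of j] show "\<exists>r'. strict_mono r' \<and> convergent (\<lambda>n. w ((s \<circ> r') n) j)"
      by (simp add: o_def)
  qed
  have "convergent (\<lambda>n. w (D.diagseq n) j)" for j
  proof -
    have "convergent (\<lambda>n. w ((D.diagseq \<circ> (+) (Suc j)) n) j)"
    proof (rule D.diagseq_holds)
      fix r s n assume r: "strict_mono (r::nat\<Rightarrow>nat)" and c: "convergent (\<lambda>x. w (s x) n)"
      then obtain l where "(\<lambda>x. w (s x) n) \<longlonglongrightarrow> l" by (auto simp: convergent_def)
      from LIMSEQ_subseq_LIMSEQ[OF this r] show "convergent (\<lambda>x. w ((s \<circ> r) x) n)"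
        unfolding convergent_def o_def by (rule exI)
    qed
    then obtain l where "(\<lambda>n. w (D.diagseq (Suc j + n)) j) \<longlonglongrightarrow> l" by (auto simp: convergent_def)
    then have "(\<lambda>n. w (D.diagseq (n + Suc j)) j) \<longlonglongrightarrow> l" by (simp add: add.commute)
    then have "(\<lambda>n. w (D.diagseq n) j) \<longlonglongrightarrow> l" by (rule LIMSEQ_offset)
    then show ?thesis by (auto simp: convergent_def)
  qed
  with D.subseq_diagseq show ?thesis by blast
qed



locale setting =
  fixes L :: "(real \<Rightarrow> 'y) metric"
    and g :: "real \<Rightarrow> 'y"
    and U :: "(real \<Rightarrow> 'y) \<Rightarrow> real \<Rightarrow> real \<Rightarrow> 'x::banach \<Rightarrow> 'x"
  assumes hull_cpt: "compactin (mtopology_of L) (trhull L g)"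
    and T_cont: "\<And>h. transl h ` trhull L g \<subseteq> trhull L g \<and>
        continuous_map (subtopology (mtopology_of L) (trhull L g))
                       (subtopology (mtopology_of L) (trhull L g)) (transl h)"
    and proc: "\<And>f. f \<in> trhull L g \<Longrightarrow> is_process (U f)"
    and transl_id: "\<And>f h t \<tau>. f \<in> trhull L g \<Longrightarrow> \<tau> \<le> t \<Longrightarrow>
        U f (h + t) (h + \<tau>) = U (transl h f) t \<tau>"
    and diss: "uniformly_totally_dissipative (trhull L g) U"
    and aclosed: "asymptotically_closed L (trhull L g) U"
begin

lemma comp:
  assumes "f \<in> trhull L g" "\<tau> \<le> s" "s \<le> t"
  shows "U f t \<tau> x = U f t s (U f s \<tau> x)"
  using proc[OF assms(1)] assms(2,3) unfolding is_process_def by (metis comp_apply)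

lemma idp:
  assumes "f \<in> trhull L g"
  shows "U f t t x = x"
  using proc[OF assms(1)] unfolding is_process_def by simp

lemma absorb:
  assumes "bounded C" "e > 0"
  obtains M te where "finite M"
    "\<And>f t \<tau>. f \<in> trhull L g \<Longrightarrow> t - \<tau> \<ge> te \<Longrightarrow> U f t \<tau> ` C \<subseteq> (\<Union>m\<in>M. ball m e)"
proof -
  obtain M where M: "finite M" "uniformly_absorbing (trhull L g) U (\<Union>m\<in>M. ball m e)"
    using diss[unfolded uniformly_totally_dissipative_def, rule_format, OF assms(2)] by (elim exE conjE)
  obtain te where te: "\<forall>f\<in>trhull L g. \<forall>t \<tau>. t - \<tau> \<ge> te \<longrightarrow> U f t \<tau> ` C \<subseteq> (\<Union>m\<in>M. ball m e)"
    using M(2)[unfolded uniformly_absorbing_def, rule_format, OF assms(1)] by (elim exE)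
  show ?thesis
  proof (rule that[OF M(1)])
    fix f t \<tau> assume "f \<in> trhull L g" "t - \<tau> \<ge> te"
    then show "U f t \<tau> ` C \<subseteq> (\<Union>m\<in>M. ball m e)" using te by simp
  qed
qed

lemma hs_data:
  obtains I hs where "hs (0::nat) = (0::real)" "0 \<in> I" "1 \<in> I" "hs 1 > 0"
    "\<And>k. k \<in> I \<Longrightarrow> hs k \<ge> 0"
    "\<And>fs f xs \<xi>. (\<forall>n. fs n \<in> trhull L g) \<Longrightarrow> f \<in> trhull L g \<Longrightarrow>
            limitin (mtopology_of L) fs f sequentially \<Longrightarrow>
            (\<forall>k\<in>I. ((\<lambda>n. U (fs n) (hs k) 0 (xs n)) \<longlongrightarrow> \<xi> k) sequentially) \<Longrightarrow>
            (\<forall>k\<in>I. U f (hs k) 0 (\<xi> 0) = \<xi> k)"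
proof -
  obtain I hs where I: "I = UNIV \<or> (\<exists>n\<ge>2. I = {..<n})" and h0: "hs (0::nat) = (0::real)"
    and mono: "\<forall>i\<in>I. \<forall>j\<in>I. i < j \<longrightarrow> hs i < hs j"
    and AC: "\<forall>fs f xs \<xi>. (\<forall>n. fs n \<in> trhull L g) \<and> f \<in> trhull L g \<and>
            limitin (mtopology_of L) fs f sequentially \<and>
            (\<forall>k\<in>I. ((\<lambda>n. U (fs n) (hs k) 0 (xs n)) \<longlongrightarrow> \<xi> k) sequentially) \<longrightarrow>
            (\<forall>k\<in>I. U f (hs k) 0 (\<xi> 0) = \<xi> k)"
    using aclosed unfolding asymptotically_closed_def by (elim exE conjE) 
  have I0: "0 \<in> I" and I1: "1 \<in> I" using I by auto
  have pos: "hs 1 > 0" using mono I0 I1 h0 by force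
  have nn: "hs k \<ge> 0" if "k \<in> I" for k
  proof (cases "k = 0")
    case True then show ?thesis using h0 by simp
  next
    case False then have "hs 0 < hs k" using mono I0 that by blast
    then show ?thesis using h0 by simp
  qed
  show ?thesis
  proof (rule that[OF h0 I0 I1 pos nn])
    fix fs f xs \<xi>
    assume "\<forall>n. fs n \<in> trhull L g" "f \<in> trhull L g" "limitin (mtopology_of L) fs f sequentially"
       "\<forall>k\<in>I. ((\<lambda>n. U (fs n) (hs k) 0 (xs n)) \<longlongrightarrow> \<xi> k) sequentially"
    then show "\<forall>k\<in>I. U f (hs k) 0 (\<xi> 0) = \<xi> k" using AC by blast
  qed
qed

lemma neg_mul_mono:
  fixes h :: real
  assumes "0 < h" "a \<le> b"
  shows "- real b * h \<le> - real a * h"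
  using mult_right_mono[of "real a" "real b" h] assms by simp

lemma extract_traj:
  assumes C: "bounded C" and fsH: "\<And>n. fs n \<in> trhull L g" and xsC: "\<And>n. xs n \<in> C"
    and ssn: "\<And>n. ss n \<ge> real n"
  shows "\<exists>r f u. strict_mono r \<and> f \<in> trhull L g \<and> complete_bounded_trajectory (U f) u \<and>
     ((\<lambda>n. U (fs (r n)) 0 (- ss (r n)) (xs (r n))) \<longlongrightarrow> u 0) sequentially"
proof -
  obtain hs I where h0: "hs (0::nat) = (0::real)" and I0: "0 \<in> I" and I1: "1 \<in> I" and h1pos: "hs 1 > 0"
    and nn: "\<And>k. k \<in> I \<Longrightarrow> hs k \<ge> 0"
    and AC: "\<And>fs f xs \<xi>. (\<forall>n. fs n \<in> trhull L g) \<Longrightarrow> f \<in> trhull L g \<Longrightarrow>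
            limitin (mtopology_of L) fs f sequentially \<Longrightarrow>
            (\<forall>k\<in>I. ((\<lambda>n. U (fs n) (hs k) 0 (xs n)) \<longlongrightarrow> \<xi> k) sequentially) \<Longrightarrow>
            (\<forall>k\<in>I. U f (hs k) 0 (\<xi> 0) = \<xi> k)"
    by (rule hs_data) (rule that; assumption)
  define h1 where "h1 = hs 1"
  have h1p: "h1 > 0" using h1pos by (simp add: h1_def)
  have cs: "compactin (Metric_space.mtopology (mspace L) (mdist L)) (trhull L g)"
    using hull_cpt unfolding mtopology_of_def .
  have rng: "range fs \<subseteq> trhull L g" using fsH by auto
  have "\<forall>\<sigma>::nat \<Rightarrow> _. range \<sigma> \<subseteq> trhull L g \<longrightarrow> (\<exists>l r. l \<in> trhull L g \<and> strict_mono r \<and>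
      limitin (Metric_space.mtopology (mspace L) (mdist L)) (\<sigma> \<circ> r) l sequentially)"
    using cs by (simp add: Metric_space.compactin_sequentially[OF Metric_space_mspace_mdist])
  from this[rule_format, OF rng] obtain f r1 where fH: "f \<in> trhull L g" and r1: "strict_mono r1"
    and f_lim: "limitin (mtopology_of L) (fs \<circ> r1) f sequentially"
    unfolding mtopology_of_def by (elim exE conjE)
  define tm where "tm j = - real (fst (prod_decode j)) * h1 + max 0 (hs (snd (prod_decode j)))" for j
  define w where "w n j = U (fs (r1 n)) (tm j) (- ss (r1 n)) (xs (r1 n))" for n j
  have tm_enc: "tm (prod_encode (m,k)) = - real m * h1 + max 0 (hs k)" for m k
    by (simp add: tm_def)
  have ev_in: "\<forall>n \<ge> nat \<lceil>te - tm j\<rceil>. w n j \<in> B"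
    if ab: "\<And>f t \<tau>. f \<in> trhull L g \<Longrightarrow> t - \<tau> \<ge> te \<Longrightarrow> U f t \<tau> ` C \<subseteq> B" for te B j
  proof (intro allI impI)
    fix n assume "nat \<lceil>te - tm j\<rceil> \<le> n"
    then have "te - tm j \<le> real n" by simp
    also have "real n \<le> real (r1 n)" using seq_suble[OF r1, of n] by simp
    also have "\<dots> \<le> ss (r1 n)" by (rule ssn)
    finally have "tm j - (- ss (r1 n)) \<ge> te" by simp
    then have "U (fs (r1 n)) (tm j) (- ss (r1 n)) ` C \<subseteq> B" by (rule ab[OF fsH])
    then show "w n j \<in> B" unfolding w_def using xsC by (simp add: image_subset_iff)
  qed
  have TB: "\<exists>k N. finite k \<and> (\<forall>n\<ge>N. w n j \<in> (\<Union>x\<in>k. ball x e))" if e: "e>0" for j e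
  proof -
    obtain M te where "finite M" and ab: "\<And>f t \<tau>. f \<in> trhull L g \<Longrightarrow> t - \<tau> \<ge> te \<Longrightarrow> U f t \<tau> ` C \<subseteq> (\<Union>m\<in>M. ball m e)"
      by (rule absorb[OF C e]) (rule that; assumption)
    have "\<forall>n\<ge>nat \<lceil>te - tm j\<rceil>. w n j \<in> (\<Union>m\<in>M. ball m e)" by (rule ev_in[OF ab])
    with \<open>finite M\<close> show ?thesis by (intro exI[of _ M] exI[of _ "nat \<lceil>te - tm j\<rceil>"] conjI)
  qed
  have "\<exists>r. strict_mono r \<and> (\<forall>j. convergent (\<lambda>n. w (r n) j))"
    by (rule diag_conv) (rule TB)
  then obtain r2 where r2: "strict_mono r2" and cv: "\<forall>j. convergent (\<lambda>n. w (r2 n) j)"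
    by (elim exE conjE)
  define \<xi> where "\<xi> j = lim (\<lambda>n. w (r2 n) j)" for j
  have xiL: "(\<lambda>n. w (r2 n) j) \<longlonglongrightarrow> \<xi> j" for j
    using cv unfolding \<xi>_def by (simp add: convergent_LIMSEQ_iff)
  define r where "r = r1 \<circ> r2"
  have r: "strict_mono r" unfolding r_def using r1 r2 by (rule strict_mono_o)
  have rn: "r n = r1 (r2 n)" for n by (simp add: r_def)
  have flim: "limitin (mtopology_of L) (fs \<circ> r) f sequentially"
    using limitin_subsequence[OF r2 f_lim] unfolding r_def by (simp add: o_assoc)
  define a where "a m = \<xi> (prod_encode (m, 0))" for m
  have clA: "U f (- real m * h1 + hs k) (- real m * h1) (a m) = \<xi> (prod_encode (m,k))"
    if kI: "k \<in> I" for m k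
  proof -
    define s where "s = - real m * h1"
    have T1: "transl s ` trhull L g \<subseteq> trhull L g"
      and T2: "continuous_map (subtopology (mtopology_of L) (trhull L g))
                 (subtopology (mtopology_of L) (trhull L g)) (transl s)"
      using T_cont[of s] by auto
    have fsH': "\<forall>n. transl s (fs (r n)) \<in> trhull L g" using T1 fsH by (simp add: image_subset_iff)
    have fH': "transl s f \<in> trhull L g" using T1 fH by (simp add: image_subset_iff)
    have "limitin (subtopology (mtopology_of L) (trhull L g)) (fs \<circ> r) f sequentially"
      using flim fH fsH by (simp add: limitin_subtopology)
    from continuous_map_limit[OF T2 this]
    have "limitin (mtopology_of L) (transl s \<circ> (fs \<circ> r)) (transl s f) sequentially"
      by (simp add: limitin_subtopology)
    then have lim': "limitin (mtopology_of L) (\<lambda>n. transl s (fs (r n))) (transl s f) sequentially"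
      by (simp add: o_def)
    have conv': "\<forall>k\<in>I. ((\<lambda>n. U (transl s (fs (r n))) (hs k) 0 (w (r2 n) (prod_encode (m,0))))
                    \<longlongrightarrow> \<xi> (prod_encode (m,k))) sequentially"
    proof
      fix k assume kI: "k \<in> I"
      have hk: "0 \<le> hs k" using nn kI .
      have ev: "eventually (\<lambda>n. w (r2 n) (prod_encode (m,k)) =
                   U (transl s (fs (r n))) (hs k) 0 (w (r2 n) (prod_encode (m,0)))) sequentially"
      proof (rule eventually_sequentiallyI[of "nat \<lceil>real m * h1\<rceil>"])
        fix n assume n: "nat \<lceil>real m * h1\<rceil> \<le> n"
        have "real m * h1 \<le> real n" using n by simp
        also have "real n \<le> real (r n)" using seq_suble[OF r, of n] by simp
        also have "\<dots> \<le> ss (r n)" by (rule ssn)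
        finally have le1: "- ss (r n) \<le> s" unfolding s_def by simp
        have FH: "fs (r n) \<in> trhull L g" by (rule fsH)
        have e1: "U (transl s (fs (r n))) (hs k) 0 = U (fs (r n)) (s + hs k) s"
          using transl_id[OF FH hk, of s] by simp
        have "U (transl s (fs (r n))) (hs k) 0 (w (r2 n) (prod_encode (m,0)))
             = U (fs (r n)) (s + hs k) s (U (fs (r n)) s (- ss (r n)) (xs (r n)))"
          unfolding e1 by (simp add: w_def tm_enc s_def h0 rn)
        also have "\<dots> = U (fs (r n)) (s + hs k) (- ss (r n)) (xs (r n))"
          using comp[OF FH, of "- ss (r n)" s "s + hs k"] le1 hk by simp
        also have "\<dots> = w (r2 n) (prod_encode (m,k))"
          using hk by (simp add: w_def tm_enc s_def rn)
        finally show "w (r2 n) (prod_encode (m,k)) =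
                   U (transl s (fs (r n))) (hs k) 0 (w (r2 n) (prod_encode (m,0)))" by simp
      qed
      show "((\<lambda>n. U (transl s (fs (r n))) (hs k) 0 (w (r2 n) (prod_encode (m,0))))
                    \<longlongrightarrow> \<xi> (prod_encode (m,k))) sequentially"
        using xiL[of "prod_encode (m,k)"] tendsto_cong[OF ev] by simp
    qed
    have res: "\<forall>k\<in>I. U (transl s f) (hs k) 0 (\<xi> (prod_encode (m,0))) = \<xi> (prod_encode (m,k))"
      using AC[of "\<lambda>n. transl s (fs (r n))" "transl s f" "\<lambda>n. w (r2 n) (prod_encode (m,0))"
                 "\<lambda>k. \<xi> (prod_encode (m,k))", OF fsH' fH' lim' conv'] by simp
    then have "U (transl s f) (hs k) 0 (a m) = \<xi> (prod_encode (m,k))" using kI by (simp add: a_def)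
    moreover have "U (transl s f) (hs k) 0 = U f (s + hs k) s" using transl_id[OF fH nn[OF kI], of s] by simp
    ultimately show ?thesis by (simp add: s_def)
  qed
  have wB: "w n (prod_encode (Suc m, 1)) = w n (prod_encode (m, 0))" for n m
  proof -
    have mx: "max 0 (hs 1) = h1" using h1pos by (simp add: h1_def)
    have "tm (prod_encode (Suc m, 1)) = tm (prod_encode (m, 0))"
      unfolding tm_enc mx h0 by (simp add: algebra_simps)
    then show ?thesis by (simp add: w_def)
  qed
  have chain1: "U f (- real m * h1) (- real (Suc m) * h1) (a (Suc m)) = a m" for m
  proof -
    have "U f (- real (Suc m) * h1 + hs 1) (- real (Suc m) * h1) (a (Suc m)) = \<xi> (prod_encode (Suc m,1))"
      by (rule clA[OF I1])
    also have "\<xi> (prod_encode (Suc m,1)) = a m" unfolding a_def \<xi>_def wB ..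
    also have "- real (Suc m) * h1 + hs 1 = - real m * h1" by (simp add: h1_def algebra_simps)
    finally show ?thesis .
  qed
  have chain: "U f (- real m * h1) (- real (m + j) * h1) (a (m + j)) = a m" for m j
  proof (induction j)
    case 0 then show ?case by (simp add: idp[OF fH])
  next
    case (Suc j)
    have le1: "- real (m + Suc j) * h1 \<le> - real (m + j) * h1" using h1p by (rule neg_mul_mono) simp
    have le2: "- real (m + j) * h1 \<le> - real m * h1" using h1p by (rule neg_mul_mono) simp
    have "U f (- real m * h1) (- real (m + Suc j) * h1) (a (m + Suc j))
        = U f (- real m * h1) (- real (m + j) * h1) (U f (- real (m + j) * h1) (- real (m + Suc j) * h1) (a (m + Suc j)))"
      by (rule comp[OF fH le1 le2])
    also have "U f (- real (m + j) * h1) (- real (m + Suc j) * h1) (a (m + Suc j)) = a (m + j)"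
      using chain1[of "m + j"] by simp
    finally show ?case using Suc.IH by simp
  qed
  define Mt where "Mt t = nat \<lceil>- t / h1\<rceil>" for t
  define u where "u t = U f t (- real (Mt t) * h1) (a (Mt t))" for t
  have Mt_le: "- real (Mt t) * h1 \<le> t" for t
  proof -
    have "- t / h1 \<le> real (Mt t)" unfolding Mt_def by (rule real_nat_ceiling_ge)
    then have "- t \<le> real (Mt t) * h1" by (simp only: pos_divide_le_eq[OF h1p])
    then show ?thesis by simp
  qed
  have U1: "u t = U f t (- real m * h1) (a m)" if tm_le: "- real m * h1 \<le> t" for t m
  proof -
    have "- t \<le> real m * h1" using tm_le by simp
    then have "- t / h1 \<le> real m" by (simp only: pos_divide_le_eq[OF h1p])
    then have "Mt t \<le> m" unfolding Mt_def by simp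
    then obtain j where mj: "m = Mt t + j" using le_iff_add by blast
    have le1: "- real (Mt t + j) * h1 \<le> - real (Mt t) * h1" using h1p by (rule neg_mul_mono) simp
    have "u t = U f t (- real (Mt t) * h1) (U f (- real (Mt t) * h1) (- real (Mt t + j) * h1) (a (Mt t + j)))"
      unfolding u_def chain ..
    also have "\<dots> = U f t (- real (Mt t + j) * h1) (a (Mt t + j))"
      by (rule comp[OF fH le1 Mt_le, symmetric])
    finally show ?thesis using mj by simp
  qed
  have traj: "u s = U f s \<tau> (u \<tau>)" if "\<tau> \<le> s" for \<tau> s
  proof -
    have le: "- real (Mt \<tau>) * h1 \<le> s" using Mt_le[of \<tau>] that by linarith
    have "u s = U f s (- real (Mt \<tau>) * h1) (a (Mt \<tau>))" by (rule U1[OF le])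
    also have "\<dots> = U f s \<tau> (U f \<tau> (- real (Mt \<tau>) * h1) (a (Mt \<tau>)))"
      by (rule comp[OF fH Mt_le that])
    also have "U f \<tau> (- real (Mt \<tau>) * h1) (a (Mt \<tau>)) = u \<tau>" by (simp add: u_def)
    finally show ?thesis .
  qed
  obtain M1 te1 where "finite M1" and ab1: "\<And>f t \<tau>. f \<in> trhull L g \<Longrightarrow> t - \<tau> \<ge> te1 \<Longrightarrow> U f t \<tau> ` C \<subseteq> (\<Union>m\<in>M1. ball m 1)"
    by (rule absorb[OF C zero_less_one]) (rule that; assumption)
  define B where "B = (\<Union>m\<in>M1. ball m (1::real))"
  have bB: "bounded (closure B)" unfolding B_def using \<open>finite M1\<close> by (intro bounded_closure bounded_UN) auto
  have aB: "a m \<in> closure B" for m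
  proof (rule Lim_in_closed_set)
    show "closed (closure B)" by simp
    show "(\<lambda>n. w (r2 n) (prod_encode (m,0))) \<longlonglongrightarrow> a m" unfolding a_def by (rule xiL)
    show "sequentially \<noteq> bot" by simp
    have ev: "\<forall>n\<ge>nat \<lceil>te1 - tm (prod_encode (m,0))\<rceil>. w n (prod_encode (m,0)) \<in> B"
      unfolding B_def by (rule ev_in[OF ab1])
    show "eventually (\<lambda>n. w (r2 n) (prod_encode (m,0)) \<in> closure B) sequentially"
    proof (rule eventually_sequentiallyI[of "nat \<lceil>te1 - tm (prod_encode (m,0))\<rceil>"])
      fix n assume n: "nat \<lceil>te1 - tm (prod_encode (m,0))\<rceil> \<le> n"
      have "n \<le> r2 n" using seq_suble[OF r2] .
      then have "w (r2 n) (prod_encode (m,0)) \<in> B" using ev n by simp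
      then show "w (r2 n) (prod_encode (m,0)) \<in> closure B" using closure_subset by blast
    qed
  qed
  obtain M2 te2 where "finite M2" and ab2: "\<And>f t \<tau>. f \<in> trhull L g \<Longrightarrow> t - \<tau> \<ge> te2 \<Longrightarrow> U f t \<tau> ` closure B \<subseteq> (\<Union>m\<in>M2. ball m 1)"
    by (rule absorb[OF bB zero_less_one]) (rule that; assumption)
  have rangeu: "range u \<subseteq> (\<Union>m\<in>M2. ball m 1)"
  proof
    fix y assume "y \<in> range u"
    then obtain t where y: "y = u t" by blast
    define m where "m = nat \<lceil>(max te2 0 - t) / h1\<rceil>"
    have "(max te2 0 - t) / h1 \<le> real m" unfolding m_def by (rule real_nat_ceiling_ge)
    then have mh: "max te2 0 - t \<le> real m * h1" by (simp only: pos_divide_le_eq[OF h1p])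
    have le: "- real m * h1 \<le> t" using mh by linarith
    have te: "t - (- real m * h1) \<ge> te2" using mh by linarith
    have "u t = U f t (- real m * h1) (a m)" by (rule U1[OF le])
    also have "\<dots> \<in> U f t (- real m * h1) ` closure B" using aB by blast
    finally show "y \<in> (\<Union>m\<in>M2. ball m 1)" using ab2[OF fH te] y by blast
  qed
  have bu: "bounded (range u)"
    using \<open>finite M2\<close> rangeu by (meson bounded_UN bounded_ball bounded_subset)
  have cbt: "complete_bounded_trajectory (U f) u"
    unfolding complete_bounded_trajectory_def using bu traj by blast
  have M0: "Mt 0 = 0" by (simp add: Mt_def)
  have u0: "u 0 = a 0" by (simp add: u_def M0 idp[OF fH])
  have "(\<lambda>n. U (fs (r n)) 0 (- ss (r n)) (xs (r n))) = (\<lambda>n. w (r2 n) (prod_encode (0,0)))"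
    by (simp add: w_def tm_enc h0 rn)
  then have "((\<lambda>n. U (fs (r n)) 0 (- ss (r n)) (xs (r n))) \<longlongrightarrow> u 0) sequentially"
    using xiL[of "prod_encode (0,0)"] by (simp add: u0 a_def)
  then show ?thesis using r fH cbt by blast
qed

lemma traj_min:
  assumes K: "compact K" "uniformly_attracting (trhull L g) U K"
    and fH: "f \<in> trhull L g" and u: "complete_bounded_trajectory (U f) u"
  shows "u 0 \<in> K"
proof -
  have bu: "bounded (range u)" and tr: "\<And>\<tau> s. \<tau> \<le> s \<Longrightarrow> u s = U f s \<tau> (u \<tau>)"
    using u unfolding complete_bounded_trajectory_def by auto
  have ne: "range u \<noteq> {}" by simp
  have "u 0 \<in> closure K"
    unfolding closure_approachable
  proof (intro allI impI)
    fix e :: real assume e: "e > 0"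
    obtain T where T: "\<forall>f\<in>trhull L g. \<forall>t \<tau>. t - \<tau> \<ge> T \<longrightarrow> (\<forall>x\<in>range u. \<exists>\<xi>\<in>K. norm (U f t \<tau> x - \<xi>) < e)"
      using K(2)[unfolded uniformly_attracting_def, rule_format, OF conjI[OF bu ne] e] by (elim exE)
    have TT: "0 - (- \<bar>T\<bar>) \<ge> T" by simp
    have h: "\<forall>x\<in>range u. \<exists>\<xi>\<in>K. norm (U f 0 (- \<bar>T\<bar>) x - \<xi>) < e"
      using T fH TT by simp
    have "\<exists>\<xi>\<in>K. norm (U f 0 (- \<bar>T\<bar>) (u (- \<bar>T\<bar>)) - \<xi>) < e" using h[rule_format, OF rangeI] .
    moreover have "U f 0 (- \<bar>T\<bar>) (u (- \<bar>T\<bar>)) = u 0" using tr[of "- \<bar>T\<bar>" 0] by simp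
    ultimately obtain \<xi> where "\<xi> \<in> K" "norm (u 0 - \<xi>) < e" by auto
    then show "\<exists>y\<in>K. dist y (u 0) < e" by (auto simp: dist_norm norm_minus_commute)
  qed
  then show ?thesis using K(1) compact_imp_closed closure_closed by metis
qed

lemma traj_abs:
  obtains B where "bounded B"
    "\<And>f u. f \<in> trhull L g \<Longrightarrow> complete_bounded_trajectory (U f) u \<Longrightarrow> range u \<subseteq> B"
proof -
  obtain M where M: "finite M" "uniformly_absorbing (trhull L g) U (\<Union>m\<in>M. ball m 1)"
    using diss[unfolded uniformly_totally_dissipative_def, rule_format, OF zero_less_one] by (elim exE conjE)
  have bB: "bounded (\<Union>m\<in>M. ball m (1::real))" using M(1) by auto
  have rB: "range u \<subseteq> (\<Union>m\<in>M. ball m 1)"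
    if fH: "f \<in> trhull L g" and u: "complete_bounded_trajectory (U f) u" for f u
  proof
    have bu: "bounded (range u)" and tr: "\<And>\<tau> s. \<tau> \<le> s \<Longrightarrow> u s = U f s \<tau> (u \<tau>)"
      using u unfolding complete_bounded_trajectory_def by auto
    obtain te where te: "\<forall>f\<in>trhull L g. \<forall>t \<tau>. t - \<tau> \<ge> te \<longrightarrow> U f t \<tau> ` range u \<subseteq> (\<Union>m\<in>M. ball m 1)"
      using M(2)[unfolded uniformly_absorbing_def, rule_format, OF bu] by (elim exE)
    fix y assume "y \<in> range u"
    then obtain t where y: "y = u t" by blast
    have tt: "t - (t - \<bar>te\<bar>) \<ge> te" by simp
    have sub: "U f t (t - \<bar>te\<bar>) ` range u \<subseteq> (\<Union>m\<in>M. ball m 1)" using te[rule_format, OF fH tt] .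
    have eq: "U f t (t - \<bar>te\<bar>) (u (t - \<bar>te\<bar>)) = u t" using tr[of "t - \<bar>te\<bar>" t] by simp
    have "U f t (t - \<bar>te\<bar>) (u (t - \<bar>te\<bar>)) \<in> U f t (t - \<bar>te\<bar>) ` range u" by simp
    with sub have "U f t (t - \<bar>te\<bar>) (u (t - \<bar>te\<bar>)) \<in> (\<Union>m\<in>M. ball m 1)" by (rule subsetD)
    then show "y \<in> (\<Union>m\<in>M. ball m 1)" unfolding y eq .
  qed
  show ?thesis by (rule that[OF bB rB])
qed

lemma main:
  "uniform_global_attractor (trhull L g) U
           (\<Union>f\<in>trhull L g. {u 0 | u. complete_bounded_trajectory (U f) u})"
proof -
  define KK where "KK = (\<Union>f\<in>trhull L g. {u 0 | u. complete_bounded_trajectory (U f) u})"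
  have memK: "y \<in> KK \<longleftrightarrow> (\<exists>f u. f \<in> trhull L g \<and> complete_bounded_trajectory (U f) u \<and> y = u 0)" for y
    unfolding KK_def by blast
  have "compact KK \<and> uniformly_attracting (trhull L g) U KK \<and>
     (\<forall>K. compact K \<and> uniformly_attracting (trhull L g) U K \<longrightarrow> KK \<subseteq> K)"
proof (intro conjI allI impI)
  obtain B where bB: "bounded B" and rB: "\<And>f u. f \<in> trhull L g \<Longrightarrow> complete_bounded_trajectory (U f) u \<Longrightarrow> range u \<subseteq> B"
    by (rule traj_abs) (rule that; assumption)
  show "compact KK" unfolding compact_eq_seq_compact_metric seq_compact_def
  proof (intro allI impI)
    fix p :: "nat \<Rightarrow> 'x" assume p: "\<forall>n. p n \<in> KK"
    have "\<forall>n. \<exists>f u. f \<in> trhull L g \<and> complete_bounded_trajectory (U f) u \<and> p n = u 0"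
      using p memK by metis
    then obtain F :: "nat \<Rightarrow> real \<Rightarrow> 'y" and V :: "nat \<Rightarrow> real \<Rightarrow> 'x" where F: "\<And>n. F n \<in> trhull L g" and V: "\<And>n. complete_bounded_trajectory (U (F n)) (V n)"
      and pV: "\<And>n. p n = V n 0" by metis
    have xsB: "V n (- real n) \<in> B" for n :: nat using rB[OF F V, of n] by blast
    obtain r f u where r: "strict_mono r" and fH: "f \<in> trhull L g" and u: "complete_bounded_trajectory (U f) u"
      and lim: "((\<lambda>n. U (F (r n)) 0 (- real (r n)) (V (r n) (- real (r n)))) \<longlongrightarrow> u 0) sequentially"
      using extract_traj[where C=B and fs=F and xs="\<lambda>n. V n (- real n)" and ss="\<lambda>n. real n", OF bB F xsB order.refl]
      by (elim exE conjE)
    have "U (F m) 0 (- real m) (V m (- real m)) = p m" for m :: nat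
    proof -
      have "\<forall>\<tau> s. \<tau> \<le> s \<longrightarrow> V m s = U (F m) s \<tau> (V m \<tau>)"
        using V[of m] unfolding complete_bounded_trajectory_def by blast
      then have "V m 0 = U (F m) 0 (- real m) (V m (- real m))" by simp
      then show ?thesis unfolding pV by simp
    qed
    then have "(p \<circ> r) \<longlonglongrightarrow> u 0" using lim by (simp add: o_def)
    moreover have "u 0 \<in> KK" using fH u memK by blast
    ultimately show "\<exists>l\<in>KK. \<exists>r. strict_mono r \<and> (p \<circ> r) \<longlonglongrightarrow> l" using r by blast
  qed
next
  show "uniformly_attracting (trhull L g) U KK"
    unfolding uniformly_attracting_def
  proof (intro allI impI)
    fix C :: "'x set" and e :: real
    assume Cb: "bounded C \<and> C \<noteq> {}" and e: "e > 0"
    show "\<exists>T. \<forall>f\<in>trhull L g. \<forall>t \<tau>. T \<le> t - \<tau> \<longrightarrow> (\<forall>x\<in>C. \<exists>\<xi>\<in>KK. norm (U f t \<tau> x - \<xi>) < e)"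
    proof (rule ccontr)
      assume neg: "\<not> (\<exists>T. \<forall>f\<in>trhull L g. \<forall>t \<tau>. T \<le> t - \<tau> \<longrightarrow> (\<forall>x\<in>C. \<exists>\<xi>\<in>KK. norm (U f t \<tau> x - \<xi>) < e))"
      have "\<exists>f t \<tau> x. f \<in> trhull L g \<and> real n \<le> t - \<tau> \<and> x \<in> C \<and> (\<forall>\<xi>\<in>KK. \<not> norm (U f t \<tau> x - \<xi>) < e)" for n
      proof -
        have "\<not> (\<forall>f\<in>trhull L g. \<forall>t \<tau>. real n \<le> t - \<tau> \<longrightarrow> (\<forall>x\<in>C. \<exists>\<xi>\<in>KK. norm (U f t \<tau> x - \<xi>) < e))"
          using neg by blast
        then show ?thesis by blast
      qed
      then obtain F :: "nat \<Rightarrow> real \<Rightarrow> 'y" and Tt Ta :: "nat \<Rightarrow> real" and X :: "nat \<Rightarrow> 'x" where F: "\<And>n. F n \<in> trhull L g" and TT: "\<And>n. real n \<le> Tt n - Ta n"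
        and X: "\<And>n. X n \<in> C" and far: "\<And>n. \<forall>\<xi>\<in>KK. \<not> norm (U (F n) (Tt n) (Ta n) (X n) - \<xi>) < e"
        by metis
      define gs where "gs n = transl (Tt n) (F n)" for n
      define ss where "ss n = Tt n - Ta n" for n
      have gsH: "gs n \<in> trhull L g" for n using T_cont[of "Tt n"] F[of n] unfolding gs_def by blast
      have eq: "U (F n) (Tt n) (Ta n) (X n) = U (gs n) 0 (- ss n) (X n)" for n
      proof -
        have "- ss n \<le> 0" using TT[of n] unfolding ss_def by simp
        from transl_id[OF F[of n] this, of "Tt n"]
        show ?thesis by (simp add: gs_def ss_def)
      qed
      obtain r f u where r: "strict_mono r" and fH: "f \<in> trhull L g" and u: "complete_bounded_trajectory (U f) u"
        and lim: "((\<lambda>n. U (gs (r n)) 0 (- ss (r n)) (X (r n))) \<longlongrightarrow> u 0) sequentially"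
        using extract_traj[where C=C and fs=gs and xs=X and ss=ss, OF conjunct1[OF Cb] gsH X TT[unfolded ss_def[symmetric]]]
        by (elim exE conjE)
      obtain n0 where n0: "\<forall>n\<ge>n0. norm (U (gs (r n)) 0 (- ss (r n)) (X (r n)) - u 0) < e"
        using lim e unfolding LIMSEQ_iff by blast
      have "norm (U (F (r n0)) (Tt (r n0)) (Ta (r n0)) (X (r n0)) - u 0) < e"
        using n0 eq by simp
      moreover have "u 0 \<in> KK" using fH u memK by blast
      ultimately show False using far[of "r n0"] by blast
    qed
  qed
next
  fix K assume K: "compact K \<and> uniformly_attracting (trhull L g) U K"
  show "KK \<subseteq> K"
  proof
    fix y assume "y \<in> KK"
    then obtain f u where fH: "f \<in> trhull L g" and u: "complete_bounded_trajectory (U f) u" and y: "y = u 0"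
      using memK by blast
    show "y \<in> K" unfolding y using traj_min[OF conjunct1[OF K] conjunct2[OF K] fH u] .
  qed
qed
  then show ?thesis unfolding uniform_global_attractor_def KK_def .
qed

end

theorem theorem7p3:
  fixes L :: "(real \<Rightarrow> 'y) metric"
    and g :: "real \<Rightarrow> 'y"
    and U :: "(real \<Rightarrow> 'y) \<Rightarrow> real \<Rightarrow> real \<Rightarrow> 'x::banach \<Rightarrow> 'x"
  assumes g_tc: "translation_compact L g"
    and T_cont: "\<And>h. transl h ` trhull L g \<subseteq> trhull L g \<and>
        continuous_map (subtopology (mtopology_of L) (trhull L g))
                       (subtopology (mtopology_of L) (trhull L g)) (transl h)"
    and proc: "\<And>f. f \<in> trhull L g \<Longrightarrow> is_process (U f)"
    and transl_id: "\<And>f h t \<tau>. f \<in> trhull L g \<Longrightarrow> \<tau> \<le> t \<Longrightarrow>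
        U f (h + t) (h + \<tau>) = U (transl h f) t \<tau>"
    and diss: "uniformly_totally_dissipative (trhull L g) U"
    and aclosed: "asymptotically_closed L (trhull L g) U"
  shows "uniform_global_attractor (trhull L g) U
           (\<Union>f\<in>trhull L g. {u 0 | u. complete_bounded_trajectory (U f) u})"
  proof -
  have hc: "compactin (mtopology_of L) (trhull L g)"
    using g_tc unfolding translation_compact_def trhull_def by blast
  interpret setting L g U
    by (rule setting.intro[OF hc T_cont proc transl_id diss aclosed])
  show ?thesis by (rule main)
qed

end
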